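(* Let $A=B[x;\alpha,\delta]_p$ be a Poisson polynomial algebra over a field $k$ of characteristic zero. Assume that $\delta$ is locally nilpotent and that $\alpha\delta=\delta(\alpha+s)$ for some $s\in k^\times$. Then the rule $$\theta(b)=\sum_{n=0}^\infty \frac{1}{n!}\left(\frac{-1}{s}\right)^n\delta^n(b)x^{-n}$$ defines a $k$-algebra homomorphism $\theta:B\to B[x^{\pm1}]$, and $\{x,\theta(b)\}=\theta\alpha(b)\,x$ for all $b\in B$ (bracket computed in the Poisson Laurent polynomial algebra $B[x^{\pm1};\alpha,\delta]_p$).
   Context: If $B$ is a Poisson algebra, $\alpha$ a Poisson derivation of $B$ and $\delta$ a derivation of $B$ with $\delta(\{a,b\})=\{\delta(a),b\}+\{a,\delta(b)\}+\alpha(a)\delta(b)-\delta(a)\alpha(b)$ for $a,b\in B$, then $B[x;\alpha,\delta]_p$ is $B[x]$ with the unique Poisson bracket extending that of $B$ with $\{x,b\}=\alpha(b)x+\delta(b)$, and $B[x^{\pm1};\alpha,\delta]_p$ is the unique extension of this Poisson structure to $B[x^{\pm1}]$. A derivation $\delta$ is locally nilpotent if for each $b$ some power $\delta^N(b)=0$. *)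

theory Defs
  imports "HOL-Computational_Algebra.Formal_Laurent_Series"
begin

(* A commutative k-algebra B is modelled as a type 'b :: comm_ring_1 together with
   a ring homomorphism iota : k -> B (the structure map). *)

definition ring_hom_map :: "('k::comm_ring_1 \<Rightarrow> 'b::comm_ring_1) \<Rightarrow> bool" where
  "ring_hom_map \<iota> \<longleftrightarrow> (\<forall>a b. \<iota> (a + b) = \<iota> a + \<iota> b) \<and> (\<forall>a b. \<iota> (a * b) = \<iota> a * \<iota> b) \<and> \<iota> 1 = 1"

definition k_linear :: "('k \<Rightarrow> 'b::comm_ring_1) \<Rightarrow> ('b \<Rightarrow> 'b) \<Rightarrow> bool" where
  "k_linear \<iota> f \<longleftrightarrow> (\<forall>a b. f (a + b) = f a + f b) \<and> (\<forall>c a. f (\<iota> c * a) = \<iota> c * f a)"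

definition derivation :: "('k \<Rightarrow> 'b::comm_ring_1) \<Rightarrow> ('b \<Rightarrow> 'b) \<Rightarrow> bool" where
  "derivation \<iota> d \<longleftrightarrow> k_linear \<iota> d \<and> (\<forall>a b. d (a * b) = d a * b + a * d b)"

definition poisson_bracket_on :: "'b::comm_ring_1 set \<Rightarrow> ('k \<Rightarrow> 'b) \<Rightarrow> ('b \<Rightarrow> 'b \<Rightarrow> 'b) \<Rightarrow> bool" where
  "poisson_bracket_on S \<iota> P \<longleftrightarrow>
     (\<forall>a\<in>S. \<forall>b\<in>S. P a b \<in> S) \<and>
     (\<forall>a\<in>S. \<forall>b\<in>S. \<forall>c\<in>S. P (a + b) c = P a c + P b c) \<and>
     (\<forall>c. \<forall>a\<in>S. \<forall>b\<in>S. P (\<iota> c * a) b = \<iota> c * P a b) \<and>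
     (\<forall>a\<in>S. \<forall>b\<in>S. P a b = - P b a) \<and>
     (\<forall>a\<in>S. \<forall>b\<in>S. \<forall>c\<in>S. P a (P b c) + P b (P c a) + P c (P a b) = 0) \<and>
     (\<forall>a\<in>S. \<forall>b\<in>S. \<forall>c\<in>S. P (a * b) c = a * P b c + b * P a c)"

abbreviation poisson_bracket :: "('k \<Rightarrow> 'b::comm_ring_1) \<Rightarrow> ('b \<Rightarrow> 'b \<Rightarrow> 'b) \<Rightarrow> bool" where
  "poisson_bracket \<iota> P \<equiv> poisson_bracket_on UNIV \<iota> P"

definition poisson_derivation :: "('k \<Rightarrow> 'b::comm_ring_1) \<Rightarrow> ('b \<Rightarrow> 'b \<Rightarrow> 'b) \<Rightarrow> ('b \<Rightarrow> 'b) \<Rightarrow> bool" where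
  "poisson_derivation \<iota> P \<alpha> \<longleftrightarrow> derivation \<iota> \<alpha> \<and> (\<forall>a b. \<alpha> (P a b) = P (\<alpha> a) b + P a (\<alpha> b))"

definition locally_nilpotent :: "('b::zero \<Rightarrow> 'b) \<Rightarrow> bool" where
  "locally_nilpotent d \<longleftrightarrow> (\<forall>b. \<exists>N. (d ^^ N) b = 0)"

(* Laurent polynomials B[x^{\<pm>1}]: formal Laurent series with finitely many nonzero coefficients;
   the variable x is fls_X, and B embeds via fls_const. *)
definition laurent_polys :: "'b::zero fls set" where
  "laurent_polys = {f. finite {n. fls_nth f n \<noteq> 0}}"

definition laurent_iota :: "('k \<Rightarrow> 'b::comm_ring_1) \<Rightarrow> 'k \<Rightarrow> 'b fls" where
  "laurent_iota \<iota> c = fls_const (\<iota> c)"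

(* P is a Poisson bracket on B[x^{\<pm>1}] extending that of B with {x,b} = \<alpha>(b)x + \<delta>(b),
   i.e. P is the bracket of B[x^{\<pm>1};\<alpha>,\<delta>]_p *)
definition poisson_laurent_ext ::
  "('k \<Rightarrow> 'b::comm_ring_1) \<Rightarrow> ('b \<Rightarrow> 'b \<Rightarrow> 'b) \<Rightarrow> ('b \<Rightarrow> 'b) \<Rightarrow> ('b \<Rightarrow> 'b) \<Rightarrow> ('b fls \<Rightarrow> 'b fls \<Rightarrow> 'b fls) \<Rightarrow> bool" where
  "poisson_laurent_ext \<iota> PB \<alpha> \<delta> P \<longleftrightarrow>
     poisson_bracket_on laurent_polys (laurent_iota \<iota>) P \<and>
     (\<forall>a b. P (fls_const a) (fls_const b) = fls_const (PB a b)) \<and>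
     (\<forall>b. P fls_X (fls_const b) = fls_const (\<alpha> b) * fls_X + fls_const (\<delta> b))"

(* theta(b) = sum_{n>=0} (1/n!) (-1/s)^n \<delta>^n(b) x^{-n}; the sum is over the (finite,
   by local nilpotence) set of n with \<delta>^n(b) \<noteq> 0; other terms vanish. *)
definition theta :: "('k::field_char_0 \<Rightarrow> 'b::comm_ring_1) \<Rightarrow> ('b \<Rightarrow> 'b) \<Rightarrow> 'k \<Rightarrow> 'b \<Rightarrow> 'b fls" where
  "theta \<iota> \<delta> s b = (\<Sum>n\<in>{n. (\<delta> ^^ n) b \<noteq> 0}.
      fls_const (\<iota> (inverse (fact n) * (- 1 / s) ^ n) * (\<delta> ^^ n) b) * fls_X_intpow (- int n))"

end

theory Submission
  imports Defs
begin

lemma fls_const_sum: "fls_const (\<Sum>i\<in>A. f i) = (\<Sum>i\<in>A. fls_const (f i))"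
  by (induction A rule: infinite_finite_induct) (auto simp: fls_plus_const[symmetric])

lemma add_zero_fun:
  fixes d :: "'b::comm_ring_1 \<Rightarrow> 'b"
  assumes add: "\<And>x y. d (x+y) = d x + d y"
  shows "d 0 = 0"
  using add[of 0 0] by simp

lemma fun_of_nat_mult:
  fixes d :: "'b::comm_ring_1 \<Rightarrow> 'b"
  assumes add: "\<And>x y. d (x+y) = d x + d y"
  shows "d (of_nat m * x) = of_nat m * d x"
proof (induction m)
  case 0
  then show ?case using add_zero_fun[of d, OF add] by simp
next
  case (Suc m)
  have "d (of_nat (Suc m) * x) = d (x + of_nat m * x)" by (simp add: distrib_right)
  also have "\<dots> = d x + of_nat m * d x" using add[of x "of_nat m * x"] Suc by simp
  finally show ?case by (simp add: distrib_right)
qed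

lemma add_sum_fun:
  fixes d :: "'b::comm_ring_1 \<Rightarrow> 'b"
  assumes add: "\<And>x y. d (x+y) = d x + d y"
  shows "d (\<Sum>i\<in>A. f i) = (\<Sum>i\<in>A. d (f i))"
proof (induction A rule: infinite_finite_induct)
  case (infinite A)
  then show ?case using add_zero_fun[of d, OF add] by simp
next
  case empty
  then show ?case using add_zero_fun[of d, OF add] by simp
next
  case (insert x F)
  then show ?case using add[of "f x" "sum f F"] by simp
qed

lemma leibniz:
  fixes d :: "'b::comm_ring_1 \<Rightarrow> 'b"
  assumes add: "\<And>x y. d (x+y) = d x + d y"
    and mult: "\<And>x y. d (x*y) = d x * y + x * d y"
  shows "(d^^n) (a*b) = (\<Sum>k\<le>n. of_nat (n choose k) * (d^^k) a * (d^^(n-k)) b)"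
proof (induct n)
  case 0
  then show ?case by simp
next
  case (Suc n)
  define D where "D k = (d^^k) a" for k
  define E where "E k = (d^^k) b" for k
  have dD: "d (D k) = D (k+1)" "d (E k) = E (k+1)" for k by (simp_all add: D_def E_def)
  have decomp: "{0..n+1} = {0} \<union> {n + 1} \<union> {1..n}" and decomp2: "{0..n} = {0} \<union> {1..n}"
    by auto
  have "(d^^(n+1)) (a*b) = d (\<Sum>k\<le>n. of_nat (n choose k) * D k * E (n-k))"
    using Suc.hyps by (simp add: D_def E_def)
  also have "\<dots> = (\<Sum>k\<le>n. of_nat (n choose k) * D (k+1) * E (n-k)) +
      (\<Sum>k\<le>n. of_nat (n choose k) * D k * E (n - k + 1))"
  proof -
    have "d (of_nat (n choose k) * D k * E (n-k)) = of_nat (n choose k) * D (k+1) * E (n-k)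
       + of_nat (n choose k) * D k * E (n - k + 1)" for k
      using fun_of_nat_mult[OF add, of "n choose k" "D k * E (n-k)"]
      by (simp add: mult dD mult.assoc distrib_left)
    then show ?thesis by (simp add: add_sum_fun[OF add] sum.distrib)
  qed
  also have "\<dots> = (\<Sum>k\<le>n. of_nat (n choose k) * D k * E (n + 1 - k)) +
      (\<Sum>k=1..n+1. of_nat (n choose (k - 1)) * D k * E (n + 1 - k))"
    by (simp add: atMost_atLeast0 sum.shift_bounds_cl_Suc_ivl Suc_diff_le field_simps del: sum.cl_ivl_Suc)
  also have "\<dots> = D 0 * E (n + 1) +
      (\<Sum>k=1..n. of_nat (n choose k) * D k * E (n + 1 - k)) + (D (n + 1) * E 0 +
      (\<Sum>k=1..n. of_nat (n choose (k - 1)) * D k * E (n + 1 - k)))"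
      using sum.nat_ivl_Suc' [of 1 n "\<lambda>k. of_nat (n choose (k-1)) * D k * E (n + 1 - k)"]
    by (simp add: sum.atLeast_Suc_atMost atMost_atLeast0)
  also have "\<dots> = D (n + 1) * E 0 + D 0 * E (n + 1) +
      (\<Sum>k=1..n. of_nat (n + 1 choose k) * D k * E (n + 1 - k))"
  proof -
    have eq: "(\<Sum>k=1..n. of_nat (n+1 choose k) * D k * E (n+1-k)) =
      (\<Sum>k=1..n. of_nat (n choose k) * D k * E (n+1-k)) + (\<Sum>k=1..n. of_nat (n choose (k-1)) * D k * E (n+1-k))"
      unfolding sum.distrib[symmetric]
    proof (rule sum.cong)
      fix k assume "k \<in> {1..n}"
      then have "n+1 choose k = (n choose k) + (n choose (k-1))"
        using choose_reduce_nat[of "n+1" k] by simp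
      then show "of_nat (n+1 choose k) * D k * E (n+1-k) =
        of_nat (n choose k) * D k * E (n+1-k) + of_nat (n choose (k-1)) * D k * E (n+1-k)"
        by (simp only: of_nat_add distrib_right)
    qed simp
    show ?thesis unfolding eq by (simp only: add_ac)
  qed
  also have "\<dots> = (\<Sum>k\<le>n+1. of_nat (n + 1 choose k) * D k * E (n + 1 - k))"
  proof -
    have "(\<Sum>k\<le>n+1. of_nat (n + 1 choose k) * D k * E (n + 1 - k)) =
       (\<Sum>k\<le>n. of_nat (n + 1 choose k) * D k * E (n + 1 - k)) + D (n+1) * E 0"
      by simp
    also have "(\<Sum>k\<le>n. of_nat (n + 1 choose k) * D k * E (n + 1 - k)) =
       D 0 * E (n+1) + (\<Sum>k=1..n. of_nat (n + 1 choose k) * D k * E (n + 1 - k))"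
      by (simp add: atMost_atLeast0 sum.atLeast_Suc_atMost)
    finally show ?thesis by (simp only: add_ac)
  qed
  finally show ?case unfolding D_def E_def Suc_eq_plus1 .
qed


lemma funpow_zero: fixes d :: "'a::zero \<Rightarrow> 'a" shows "d 0 = 0 \<Longrightarrow> (d ^^ k) 0 = 0"
  by (induction k) auto

lemma funpow_zero_mono:
  fixes d :: "'a::zero \<Rightarrow> 'a"
  assumes "d 0 = 0" "(d^^N) b = 0" "N \<le> m" shows "(d^^m) b = 0"
proof -
  have "(d^^m) b = (d^^(m-N)) ((d^^N) b)" using assms(3)
    by (metis funpow_add le_add_diff_inverse2 o_apply)
  then show ?thesis using assms funpow_zero by metis
qed

lemma theta_trunc:
  assumes "\<delta> 0 = 0" "(\<delta>^^N) b = 0"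
  shows "theta \<iota> \<delta> s b = (\<Sum>n<N.
      fls_const (\<iota> (inverse (fact n) * (- 1 / s) ^ n) * (\<delta> ^^ n) b) * fls_X_intpow (- int n))"
  unfolding theta_def
proof (rule sum.mono_neutral_left)
  show "{n. (\<delta> ^^ n) b \<noteq> 0} \<subseteq> {..<N}"
  proof
    fix n assume "n \<in> {n. (\<delta> ^^ n) b \<noteq> 0}"
    then show "n \<in> {..<N}" using funpow_zero_mono[OF assms, of n] by (cases "N \<le> n") auto
  qed
qed auto

lemma lp_add: "f \<in> laurent_polys \<Longrightarrow> g \<in> laurent_polys \<Longrightarrow> f + g \<in> laurent_polys"
  unfolding laurent_polys_def
  by (auto elim: finite_subset[rotated] intro: finite_subset[of _ "{n. fls_nth f n \<noteq> 0} \<union> {n. fls_nth g n \<noteq> 0}"])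

lemma lp_0: "0 \<in> laurent_polys"
  unfolding laurent_polys_def by simp

lemma lp_sum: "(\<And>i. i \<in> A \<Longrightarrow> f i \<in> laurent_polys) \<Longrightarrow> (\<Sum>i\<in>A. f i) \<in> laurent_polys"
  by (induction A rule: infinite_finite_induct) (auto simp: lp_add lp_0)

lemma lp_mono: "fls_const (c::'b::comm_ring_1) * fls_X_intpow i \<in> laurent_polys"
proof -
  have "{n. fls_nth (fls_const c * fls_X_intpow i) n \<noteq> 0} \<subseteq> {i}"
    by (auto simp: fls_X_intpow_times_conv_shift fls_shift_const_nth split: if_splits)
  then show ?thesis unfolding laurent_polys_def using finite_subset by auto
qed

lemma lp_const: "fls_const (c::'b::comm_ring_1) \<in> laurent_polys"
  using lp_mono[of c 0] by simp

lemma lp_intpow: "(fls_X_intpow i :: 'b::comm_ring_1 fls) \<in> laurent_polys"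
  using lp_mono[of 1 i] by simp

lemma lp_X: "(fls_X :: 'b::comm_ring_1 fls) \<in> laurent_polys"
  using lp_intpow[of 1] by (simp add: fls_X_conv_shift_1)

lemma ring_hom_facts:
  assumes "ring_hom_map \<iota>"
  shows "\<iota> (a + b) = \<iota> a + \<iota> b" "\<iota> (a * b) = \<iota> a * \<iota> b" "\<iota> 1 = 1" "\<iota> 0 = 0"
    "\<iota> (of_nat n) = of_nat n"
proof -
  show h1: "\<iota> (a + b) = \<iota> a + \<iota> b" "\<iota> (a * b) = \<iota> a * \<iota> b" "\<iota> 1 = 1"
    using assms unfolding ring_hom_map_def by auto
  show h0: "\<iota> 0 = 0" using assms unfolding ring_hom_map_def
    by (metis add_cancel_right_right add_0)
  show "\<iota> (of_nat n) = of_nat n"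
  proof (induction n)
    case (Suc n)
    have "\<iota> (of_nat (Suc n)) = \<iota> 1 + \<iota> (of_nat n)" using assms unfolding ring_hom_map_def by simp
    then show ?case using Suc h1(3) by simp
  qed (simp add: h0)
qed


lemma c_binom:
  fixes t :: "'k::field_char_0"
  assumes "k \<le> n"
  shows "inverse (fact n) * t ^ n * of_nat (n choose k) =
     (inverse (fact k) * t ^ k) * (inverse (fact (n-k)) * t ^ (n-k))"
proof -
  have "t ^ n = t ^ k * t ^ (n-k)" using assms by (simp flip: power_add)
  moreover have "(of_nat (n choose k) :: 'k) = fact n / (fact k * fact (n - k))"
    using binomial_fact[OF assms] .
  ultimately show ?thesis by (simp add: field_simps)
qed

lemma c_shift:
  fixes s :: "'k::field_char_0"
  assumes "s \<noteq> 0"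
  shows "inverse (fact (Suc m)) * (-1/s) ^ (Suc m) * (of_nat (Suc m) * s) = - (inverse (fact m) * (-1/s) ^ m)"
proof -
  have f: "inverse (fact (Suc m)) * (of_nat (Suc m) :: 'k) = inverse (fact m)"
    by (simp only: fact_Suc of_nat_mult) (simp add: field_simps del: of_nat_Suc)
  have g: "(-1/s) * s = -1" using assms by simp
  have "inverse (fact (Suc m)) * (-1/s) ^ (Suc m) * (of_nat (Suc m) * s)
     = (inverse (fact (Suc m)) * of_nat (Suc m)) * ((-1/s) * s) * (-1/s) ^ m"
    by (simp only: power_Suc mult_ac)
  also have "\<dots> = - (inverse (fact m) * (-1/s) ^ m)" by (simp only: f g) simp
  finally show ?thesis .
qed

lemma regroup:
  fixes x y :: "'b::comm_ring_1" and u v :: "'b fls"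
  shows "fls_const (x*y) * (u * v) = (fls_const x * u) * (fls_const y * v)"
  by (simp only: fls_const_mult_const[symmetric] mult_ac)

lemma Z_mult: "(fls_X_intpow (- int (i+j)) :: 'b::comm_ring_1 fls) = fls_X_intpow (- int i) * fls_X_intpow (- int j)"
  by (metis fls_X_intpow_times_fls_X_intpow minus_add_distrib of_nat_add)


theorem lemma3p5:
  fixes \<iota> :: "'k::field_char_0 \<Rightarrow> 'b::comm_ring_1"
    and PB :: "'b \<Rightarrow> 'b \<Rightarrow> 'b" and \<alpha> \<delta> :: "'b \<Rightarrow> 'b" and s :: 'k
  assumes iota: "ring_hom_map \<iota>"
    and PB: "poisson_bracket \<iota> PB"
    and alpha: "poisson_derivation \<iota> PB \<alpha>"
    and delta: "derivation \<iota> \<delta>"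
    and delta_compat: "\<forall>a b. \<delta> (PB a b) = PB (\<delta> a) b + PB a (\<delta> b) + \<alpha> a * \<delta> b - \<delta> a * \<alpha> b"
    and nil: "locally_nilpotent \<delta>"
    and s: "s \<noteq> 0"
    and comm: "\<forall>b. \<alpha> (\<delta> b) = \<delta> (\<alpha> b + \<iota> s * b)"
  shows "(\<forall>b. theta \<iota> \<delta> s b \<in> laurent_polys)
       \<and> (\<forall>a b. theta \<iota> \<delta> s (a + b) = theta \<iota> \<delta> s a + theta \<iota> \<delta> s b)
       \<and> (\<forall>a b. theta \<iota> \<delta> s (a * b) = theta \<iota> \<delta> s a * theta \<iota> \<delta> s b)
       \<and> theta \<iota> \<delta> s 1 = 1
       \<and> (\<forall>c b. theta \<iota> \<delta> s (\<iota> c * b) = laurent_iota \<iota> c * theta \<iota> \<delta> s b)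
       \<and> (\<forall>P. poisson_laurent_ext \<iota> PB \<alpha> \<delta> P \<longrightarrow>
             (\<forall>b. P fls_X (theta \<iota> \<delta> s b) = theta \<iota> \<delta> s (\<alpha> b) * fls_X))"
proof -
  define c :: "nat \<Rightarrow> 'k" where "c n = inverse (fact n) * (- 1 / s) ^ n" for n
  define Z :: "nat \<Rightarrow> 'b fls" where "Z n = fls_X_intpow (- int n)" for n
  define T where "T x N = (\<Sum>n<N. fls_const (\<iota> (c n) * (\<delta> ^^ n) x) * Z n)" for x N
  have dadd: "\<And>x y. \<delta> (x + y) = \<delta> x + \<delta> y"
    and dlin: "\<And>a x. \<delta> (\<iota> a * x) = \<iota> a * \<delta> x"
    and dmult: "\<And>x y. \<delta> (x * y) = \<delta> x * y + x * \<delta> y"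
    using delta unfolding derivation_def k_linear_def by auto
  have d0: "\<delta> 0 = 0" using add_zero_fun[of \<delta>, OF dadd] .
  have iadd: "\<And>a b. \<iota> (a + b) = \<iota> a + \<iota> b" and imult: "\<And>a b. \<iota> (a * b) = \<iota> a * \<iota> b"
    and i1: "\<iota> 1 = 1" and i0: "\<iota> 0 = 0" and inat: "\<And>n. \<iota> (of_nat n) = of_nat n"
    using ring_hom_facts[OF iota] by auto
  have th: "\<And>N x. (\<delta>^^N) x = 0 \<Longrightarrow> theta \<iota> \<delta> s x = T x N"
    using theta_trunc[of \<delta>, OF d0] unfolding T_def Z_def c_def by simp
  have mono: "\<And>N m x. (\<delta>^^N) x = 0 \<Longrightarrow> N \<le> m \<Longrightarrow> (\<delta>^^m) x = 0"
    using funpow_zero_mono[of \<delta>, OF d0] by blast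
  obtain Nf where Nf: "\<And>x. (\<delta>^^(Nf x)) x = 0"
    using nil unfolding locally_nilpotent_def by metis
  have dpadd: "(\<delta>^^n) (x + y) = (\<delta>^^n) x + (\<delta>^^n) y" for n x y
    by (induction n) (simp_all add: dadd)
  have dplin: "(\<delta>^^n) (\<iota> a * x) = \<iota> a * (\<delta>^^n) x" for n a x
    by (induction n) (simp_all add: dlin)
  have lpT: "T x N \<in> laurent_polys" for x N
    unfolding T_def Z_def by (rule lp_sum) (rule lp_mono)
  have part1: "\<forall>b. theta \<iota> \<delta> s b \<in> laurent_polys"
    using th[OF Nf] lpT by simp
  have part2: "\<forall>a b. theta \<iota> \<delta> s (a + b) = theta \<iota> \<delta> s a + theta \<iota> \<delta> s b"
  proof (intro allI)
    fix a b
    define N where "N = max (Nf a) (Nf b)"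
    have a0: "(\<delta>^^N) a = 0" and b0: "(\<delta>^^N) b = 0" using mono[OF Nf] unfolding N_def by auto
    have ab0: "(\<delta>^^N) (a+b) = 0" using a0 b0 dpadd by simp
    show "theta \<iota> \<delta> s (a + b) = theta \<iota> \<delta> s a + theta \<iota> \<delta> s b"
      unfolding th[OF a0] th[OF b0] th[OF ab0] T_def
      by (simp add: dpadd distrib_left fls_plus_const[symmetric] distrib_right sum.distrib)
  qed
  have part5: "\<forall>a b. theta \<iota> \<delta> s (\<iota> a * b) = laurent_iota \<iota> a * theta \<iota> \<delta> s b"
  proof (intro allI)
    fix a b
    have b0: "(\<delta>^^(Nf b)) b = 0" by (rule Nf)
    have ab0: "(\<delta>^^(Nf b)) (\<iota> a * b) = 0" using b0 dplin by simp
    show "theta \<iota> \<delta> s (\<iota> a * b) = laurent_iota \<iota> a * theta \<iota> \<delta> s b"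
      unfolding th[OF b0] th[OF ab0] T_def laurent_iota_def
    proof (simp only: dplin sum_distrib_left, rule sum.cong[OF refl])
      fix n
      show "fls_const (\<iota> (c n) * (\<iota> a * (\<delta> ^^ n) b)) * Z n =
        fls_const (\<iota> a) * (fls_const (\<iota> (c n) * (\<delta> ^^ n) b) * Z n)"
        by (metis fls_const_mult_const mult.assoc mult.left_commute)
    qed
  qed
  have part4: "theta \<iota> \<delta> s 1 = 1"
  proof -
    have "\<delta> 1 = \<delta> 1 + \<delta> 1" using dmult[of 1 1] by simp
    then have "\<delta> 1 = 0" by simp
    then have "(\<delta>^^1) 1 = 0" by simp
    then have "theta \<iota> \<delta> s 1 = T 1 1" by (rule th)
    then show ?thesis unfolding T_def by (simp add: c_def Z_def i1)
  qed
  have part3: "\<forall>a b. theta \<iota> \<delta> s (a * b) = theta \<iota> \<delta> s a * theta \<iota> \<delta> s b"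
  proof (intro allI)
    fix a b
    define N where "N = max (Nf a) (Nf b)"
    have a0: "(\<delta>^^N) a = 0" and b0: "(\<delta>^^N) b = 0" using mono[OF Nf] unfolding N_def by auto
    define D where "D i = (\<delta>^^i) a" for i
    define E where "E i = (\<delta>^^i) b" for i
    define g where "g i j = (fls_const (\<iota> (c i) * D i) * Z i) * (fls_const (\<iota> (c j) * E j) * Z j)" for i j
    have Dz: "N \<le> i \<Longrightarrow> D i = 0" for i using mono[OF a0] unfolding D_def by simp
    have Ez: "N \<le> i \<Longrightarrow> E i = 0" for i using mono[OF b0] unfolding E_def by simp
    have ab0: "(\<delta>^^(2*N)) (a*b) = 0"
      unfolding leibniz[of \<delta>, OF dadd dmult]
    proof (rule sum.neutral, intro ballI)
      fix k assume "k \<in> {..2*N}"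
      then show "of_nat (2 * N choose k) * (\<delta> ^^ k) a * (\<delta> ^^ (2 * N - k)) b = 0"
        using Dz[of k] Ez[of "2*N-k"] unfolding D_def E_def by (cases "N \<le> k") auto
    qed
    have "theta \<iota> \<delta> s (a*b) = T (a*b) (2*N)" by (rule th[OF ab0])
    also have "\<dots> = (\<Sum>n<2*N. \<Sum>k\<le>n. g k (n-k))"
      unfolding T_def
    proof (rule sum.cong[OF refl])
      fix n
      have "fls_const (\<iota> (c n) * (\<delta>^^n)(a*b)) * Z n =
        (\<Sum>k\<le>n. fls_const (\<iota> (c n) * (of_nat (n choose k) * D k * E (n-k))) * Z n)"
        by (simp add: leibniz[of \<delta>, OF dadd dmult] sum_distrib_left fls_const_sum sum_distrib_right D_def E_def)
      also have "\<dots> = (\<Sum>k\<le>n. g k (n-k))"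
      proof (rule sum.cong[OF refl])
        fix k assume "k \<in> {..n}" hence kn: "k \<le> n" by simp
        have eq: "\<iota> (c n) * of_nat (n choose k) = \<iota> (c k) * \<iota> (c (n-k))"
          using c_binom[OF kn, of "-1/s"] unfolding c_def by (metis imult inat)
        have "\<iota> (c n) * (of_nat (n choose k) * D k * E (n-k)) = (\<iota> (c n) * of_nat (n choose k)) * D k * E (n-k)"
          by (simp only: mult.assoc)
        also have "\<dots> = (\<iota> (c k) * D k) * (\<iota> (c (n-k)) * E (n-k))"
          unfolding eq by (simp only: mult_ac)
        finally have e1: "\<iota> (c n) * (of_nat (n choose k) * D k * E (n-k)) = (\<iota> (c k) * D k) * (\<iota> (c (n-k)) * E (n-k))" .
        have e2: "Z n = Z k * Z (n-k)" using Z_mult[of k "n-k"] kn by (simp add: Z_def)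
        show "fls_const (\<iota> (c n) * (of_nat (n choose k) * D k * E (n-k))) * Z n = g k (n-k)"
          unfolding e1 e2 g_def by (rule regroup)
      qed
      finally show "fls_const (\<iota> (c n) * (\<delta>^^n)(a*b)) * Z n = (\<Sum>k\<le>n. g k (n-k))" .
    qed
    also have "\<dots> = (\<Sum>(i,j)\<in>{(i,j). i+j < 2*N}. g i j)"
      by (rule sum.triangle_reindex[symmetric])
    also have "\<dots> = (\<Sum>(i,j)\<in>{..<N} \<times> {..<N}. g i j)"
    proof (rule sum.mono_neutral_right)
      show "finite {(i,j). i+j < 2*N}"
        by (rule finite_subset[of _ "{..<2*N} \<times> {..<2*N}"]) auto
      show "{..<N} \<times> {..<N} \<subseteq> {(i,j). i+j < 2*N}" by auto
      show "\<forall>x\<in>{(i,j). i+j < 2*N} - {..<N} \<times> {..<N}. (case x of (i,j) \<Rightarrow> g i j) = 0"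
      proof
        fix x assume "x \<in> {(i,j). i+j < 2*N} - {..<N} \<times> {..<N}"
        moreover obtain i j where x: "x = (i,j)" by (cases x)
        ultimately have "\<not> (i < N \<and> j < N)" by auto
        then have "N \<le> i \<or> N \<le> j" by linarith
        then have "D i = 0 \<or> E j = 0" using Dz Ez by auto
        then show "(case x of (i,j) \<Rightarrow> g i j) = 0" unfolding x g_def by auto
      qed
    qed
    also have "\<dots> = (\<Sum>i<N. \<Sum>j<N. g i j)" by (simp add: sum.cartesian_product)
    also have "\<dots> = T a N * T b N" unfolding T_def g_def D_def E_def sum_product ..
    finally show "theta \<iota> \<delta> s (a * b) = theta \<iota> \<delta> s a * theta \<iota> \<delta> s b"
      using th[OF a0] th[OF b0] by simp
  qed
  have part6: "\<forall>P. poisson_laurent_ext \<iota> PB \<alpha> \<delta> P \<longrightarrow>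
             (\<forall>b. P fls_X (theta \<iota> \<delta> s b) = theta \<iota> \<delta> s (\<alpha> b) * fls_X)"
  proof (intro allI impI)
    fix P b assume ext: "poisson_laurent_ext \<iota> PB \<alpha> \<delta> P"
    define X :: "'b fls" where "X = fls_X"
    have br: "poisson_bracket_on laurent_polys (laurent_iota \<iota>) P"
      and pconst: "\<And>x. P X (fls_const x) = fls_const (\<alpha> x) * X + fls_const (\<delta> x)"
      using ext unfolding poisson_laurent_ext_def X_def by auto
    have padd: "\<And>f g h. f \<in> laurent_polys \<Longrightarrow> g \<in> laurent_polys \<Longrightarrow> h \<in> laurent_polys \<Longrightarrow> P (f+g) h = P f h + P g h"
      and panti: "\<And>f g. f \<in> laurent_polys \<Longrightarrow> g \<in> laurent_polys \<Longrightarrow> P f g = - P g f"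
      and pmult: "\<And>f g h. f \<in> laurent_polys \<Longrightarrow> g \<in> laurent_polys \<Longrightarrow> h \<in> laurent_polys \<Longrightarrow> P (f*g) h = f * P g h + g * P f h"
      using br unfolding poisson_bracket_on_def by blast+
    have XS: "X \<in> laurent_polys" unfolding X_def by (rule lp_X)
    have ZS: "Z n \<in> laurent_polys" for n unfolding Z_def by (rule lp_intpow)
    have DXadd: "P X (f+g) = P X f + P X g" if "f \<in> laurent_polys" "g \<in> laurent_polys" for f g
    proof -
      have "P X (f+g) = - P (f+g) X" using panti[OF XS lp_add[OF that]] .
      also have "\<dots> = - (P f X + P g X)" using padd[OF that XS] by simp
      also have "\<dots> = P X f + P X g" using panti[OF XS that(1)] panti[OF XS that(2)] by simp
      finally show ?thesis .
    qed
    have DXmult: "P X (f*g) = f * P X g + g * P X f"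
      if "f \<in> laurent_polys" "g \<in> laurent_polys" "f*g \<in> laurent_polys" for f g
    proof -
      have "P X (f*g) = - P (f*g) X" using panti[OF XS that(3)] .
      also have "\<dots> = - (f * P g X + g * P f X)" using pmult[OF that(1,2) XS] by simp
      also have "\<dots> = f * P X g + g * P X f" using panti[OF XS that(1)] panti[OF XS that(2)] by simp
      finally show ?thesis .
    qed
    have DX0: "P X 0 = 0"
      using DXadd[OF lp_0 lp_0] by simp
    have DXsum: "P X (\<Sum>i\<in>A. f i) = (\<Sum>i\<in>A. P X (f i))" if "\<And>i. f i \<in> laurent_polys" for A and f :: "nat \<Rightarrow> 'b fls"
    proof (induction A rule: infinite_finite_induct)
      case (insert x F)
      have "P X (f x + sum f F) = P X (f x) + P X (sum f F)"
        by (rule DXadd[OF that lp_sum[OF that]])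
      then show ?case using insert by simp
    qed (simp_all add: DX0)
    have cancel: "w = 0" if "w + w = 0" for w :: "'b fls"
    proof -
      have "fls_const (\<iota> (1/2)) * (fls_const (1+1)) = fls_const (\<iota> (1/2) * (\<iota> 1 + \<iota> 1))"
        by (simp only: i1 fls_const_mult_const fls_plus_const)
      also have "\<dots> = 1" by (simp only: iadd[symmetric] imult[symmetric]) (simp add: i1)
      finally have h: "fls_const (\<iota> (1/2)) * (fls_const (1+1)) = 1" .
      have "w + w = fls_const (1+1) * w" by (simp add: fls_plus_const[symmetric] distrib_right)
      then have "fls_const (\<iota> (1/2)) * (fls_const (1+1) * w) = 0" using that by simp
      then show ?thesis using h by (simp add: mult.assoc[symmetric])
    qed
    have PXX: "P X X = 0"
      using panti[OF XS XS] cancel by (metis add_eq_0_iff2 minus_add_cancel) 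
    have PX1: "P X 1 = 0"
      using DXmult[of 1 1] lp_const[of 1] by simp
    have ZX: "Z (Suc m) * X = Z m" for m
      unfolding Z_def X_def fls_X_conv_shift_1
      using fls_X_intpow_times_fls_X_intpow[of "- int (Suc m)" 1, where 'a='b] by simp
    have XZ1: "X * Z 1 = 1" using ZX[of 0] by (simp add: mult.commute Z_def)
    have PXZ1: "P X (Z 1) = 0"
    proof -
      have "0 = P X (X * Z 1)" using PX1 XZ1 by simp
      also have "\<dots> = X * P X (Z 1)" using DXmult[OF XS ZS, of 1] XZ1 lp_const[of 1] PXX by simp
      finally have "Z 1 * (X * P X (Z 1)) = 0" by simp
      then show ?thesis using XZ1 by (simp add: mult.assoc[symmetric] mult.commute)
    qed
    have PXZ: "P X (Z n) = 0" for n
    proof (induction n)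
      case 0 then show ?case using PX1 by (simp add: Z_def)
    next
      case (Suc n)
      have "Z (Suc n) = Z 1 * Z n" using Z_mult[of 1 n] by (simp add: Z_def)
      then show ?case using DXmult[OF ZS ZS, of 1 n] ZS[of "Suc n"] PXZ1 Suc by simp
    qed
    have PXterm: "P X (fls_const x * Z n) = Z n * (fls_const (\<alpha> x) * X + fls_const (\<delta> x))" for x n
      using DXmult[OF lp_const ZS] lp_mono[of x "- int n"] PXZ pconst by (simp add: Z_def)
    have aadd: "\<And>x y. \<alpha> (x + y) = \<alpha> x + \<alpha> y"
      and alin: "\<And>a x. \<alpha> (\<iota> a * x) = \<iota> a * \<alpha> x"
      using alpha unfolding poisson_derivation_def derivation_def k_linear_def by auto
    have a0: "\<alpha> 0 = 0" using add_zero_fun[of \<alpha>, OF aadd] .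
    have apow: "\<alpha> ((\<delta>^^n) x) = (\<delta>^^n) (\<alpha> x) + \<iota> (of_nat n * s) * (\<delta>^^n) x" for n x
    proof (induction n)
      case 0 then show ?case by (simp add: i0)
    next
      case (Suc n)
      have "\<alpha> ((\<delta>^^Suc n) x) = \<delta> (\<alpha> ((\<delta>^^n) x) + \<iota> s * (\<delta>^^n) x)"
        using comm by simp
      also have "\<dots> = (\<delta>^^Suc n) (\<alpha> x) + \<iota> (of_nat n * s) * (\<delta>^^Suc n) x + \<iota> s * (\<delta>^^Suc n) x"
        unfolding Suc by (simp add: dadd dlin)
      also have "\<dots> = (\<delta>^^Suc n) (\<alpha> x) + \<iota> (of_nat (Suc n) * s) * (\<delta>^^Suc n) x"
        by (simp add: iadd distrib_right add.assoc)
      finally show ?case .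
    qed
    have ineg: "\<iota> (- x) = - \<iota> x" for x
      using iadd[of "-x" x] i0 by (simp add: eq_neg_iff_add_eq_0)
    define N0 where "N0 = Nf b"
    define N where "N = Suc N0"
    have b0: "(\<delta>^^N) b = 0" using Nf[of b] d0 unfolding N_def N0_def by simp
    have ab0: "(\<delta>^^N) (\<alpha> b) = 0" using apow[of N b] b0 a0 by simp
    define u where "u n = (\<delta>^^n) b" for n
    define v where "v n = (\<delta>^^n) (\<alpha> b)" for n
    define A where "A n = fls_const (\<iota> (c n) * v n) * Z n * X" for n
    define B where "B n = fls_const (\<iota> (c n * (of_nat n * s)) * u n) * Z n * X" for n
    define C where "C n = fls_const (\<iota> (c n) * u (Suc n)) * Z n" for n
    have "P X (theta \<iota> \<delta> s b) = P X (T b N)" using th[OF b0] by simp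
    also have "\<dots> = (\<Sum>n<N. A n + B n + C n)"
    proof -
      have lpterm: "fls_const y * Z n \<in> laurent_polys" for y n unfolding Z_def by (rule lp_mono)
      show ?thesis
      unfolding T_def DXsum[where f="\<lambda>n. fls_const (\<iota> (c n) * (\<delta> ^^ n) b) * Z n", OF lpterm]
    proof (rule sum.cong[OF refl])
      fix n
      show "P X (fls_const (\<iota> (c n) * (\<delta> ^^ n) b) * Z n) = A n + B n + C n"
      proof -
        have un: "(\<delta> ^^ n) b = u n" by (simp add: u_def)
        have e1: "\<alpha> (\<iota> (c n) * u n) = \<iota> (c n) * v n + \<iota> (c n * (of_nat n * s)) * u n"
          by (simp add: alin apow u_def v_def distrib_left imult mult.assoc)
        have e2: "\<delta> (\<iota> (c n) * u n) = \<iota> (c n) * u (Suc n)" by (simp add: dlin u_def)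
        have "P X (fls_const (\<iota> (c n) * u n) * Z n) =
          Z n * (fls_const (\<iota> (c n) * v n + \<iota> (c n * (of_nat n * s)) * u n) * X + fls_const (\<iota> (c n) * u (Suc n)))"
          unfolding PXterm e1 e2 ..
        also have "\<dots> = A n + B n + C n"
          unfolding A_def B_def C_def by (simp only: fls_plus_const[symmetric] distrib_left distrib_right mult_ac)
        finally show ?thesis unfolding un .
      qed
    qed
    qed
    also have "\<dots> = (\<Sum>n<N. A n) + ((\<Sum>n<N. B n) + (\<Sum>n<N. C n))"
      by (simp add: sum.distrib add.assoc)
    also have "(\<Sum>n<N. B n) + (\<Sum>n<N. C n) = 0"
    proof -
      have hB0: "B 0 = 0" by (simp add: B_def i0)
      have hBs: "(\<Sum>m<N0. B (Suc m)) = (\<Sum>m<N0. - C m)"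
      proof (rule sum.cong[OF refl])
        fix m
        have "\<iota> (c (Suc m) * (of_nat (Suc m) * s)) = - \<iota> (c m)"
          by (simp only: c_def c_shift[OF s] ineg)
        then show "B (Suc m) = - C m"
          unfolding B_def C_def by (simp add: mult.assoc ZX)
      qed
      have hB: "(\<Sum>n<N. B n) = (\<Sum>m<N0. - C m)"
        unfolding N_def sum.lessThan_Suc_shift hB0 hBs by simp
      have hCN: "C N0 = 0" using b0 unfolding C_def u_def N_def by simp
      have hC: "(\<Sum>n<N. C n) = (\<Sum>m<N0. C m)" unfolding N_def using hCN by simp
      show ?thesis unfolding hB hC by (simp add: sum_negf)
    qed
    also have "(\<Sum>n<N. A n) = T (\<alpha> b) N * X"
      unfolding T_def A_def v_def by (simp add: sum_distrib_right)
    also have "\<dots> = theta \<iota> \<delta> s (\<alpha> b) * fls_X" using th[OF ab0] X_def by simp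
    finally show "P fls_X (theta \<iota> \<delta> s b) = theta \<iota> \<delta> s (\<alpha> b) * fls_X"
      unfolding X_def by simp
  qed
  show ?thesis using part1 part2 part3 part4 part5 part6 by blast
qed

end
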